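(* Let $P\in\Delta_{\mathcal{T},\mathcal{X},\mathcal{Y}}$ with $H_P(X)>0$ and $H_P(Y)>0$. If under $P$ both $T$ is independent of $X$ and $T$ is independent of $Y$, then $\arg\max_{Q\in\Delta_P}H_Q(T\mid X,Y)$ contains more than one element.
   Context: $T,X,Y$ are random variables with finite state spaces $\mathcal{T},\mathcal{X},\mathcal{Y}$; $\Delta_{\mathcal{T},\mathcal{X},\mathcal{Y}}$ is the set of all joint distributions on $\mathcal{T}\times\mathcal{X}\times\mathcal{Y}$. For $P\in\Delta_{\mathcal{T},\mathcal{X},\mathcal{Y}}$, $\Delta_P=\{Q\in\Delta_{\mathcal{T},\mathcal{X},\mathcal{Y}}: Q(X=x,T=t)=P(X=x,T=t),\ Q(Y=y,T=t)=P(Y=y,T=t)\ \forall x,y,t\}$. $H$ denotes Shannon entropy; $H_Q(T\mid X,Y)$ the conditional entropy under $Q$. *)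

theory Defs
  imports Complex_Main
begin

definition is_dist :: "('t::finite \<Rightarrow> 'x::finite \<Rightarrow> 'y::finite \<Rightarrow> real) \<Rightarrow> bool" where
  "is_dist P \<longleftrightarrow> (\<forall>t x y. 0 \<le> P t x y) \<and> (\<Sum>t\<in>UNIV. \<Sum>x\<in>UNIV. \<Sum>y\<in>UNIV. P t x y) = 1"

definition marg_T :: "('t::finite \<Rightarrow> 'x::finite \<Rightarrow> 'y::finite \<Rightarrow> real) \<Rightarrow> 't \<Rightarrow> real" where
  "marg_T P t = (\<Sum>x\<in>UNIV. \<Sum>y\<in>UNIV. P t x y)"

definition marg_X :: "('t::finite \<Rightarrow> 'x::finite \<Rightarrow> 'y::finite \<Rightarrow> real) \<Rightarrow> 'x \<Rightarrow> real" where
  "marg_X P x = (\<Sum>t\<in>UNIV. \<Sum>y\<in>UNIV. P t x y)"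

definition marg_Y :: "('t::finite \<Rightarrow> 'x::finite \<Rightarrow> 'y::finite \<Rightarrow> real) \<Rightarrow> 'y \<Rightarrow> real" where
  "marg_Y P y = (\<Sum>t\<in>UNIV. \<Sum>x\<in>UNIV. P t x y)"

definition marg_TX :: "('t::finite \<Rightarrow> 'x::finite \<Rightarrow> 'y::finite \<Rightarrow> real) \<Rightarrow> 't \<Rightarrow> 'x \<Rightarrow> real" where
  "marg_TX P t x = (\<Sum>y\<in>UNIV. P t x y)"

definition marg_TY :: "('t::finite \<Rightarrow> 'x::finite \<Rightarrow> 'y::finite \<Rightarrow> real) \<Rightarrow> 't \<Rightarrow> 'y \<Rightarrow> real" where
  "marg_TY P t y = (\<Sum>x\<in>UNIV. P t x y)"

definition marg_XY :: "('t::finite \<Rightarrow> 'x::finite \<Rightarrow> 'y::finite \<Rightarrow> real) \<Rightarrow> 'x \<Rightarrow> 'y \<Rightarrow> real" where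
  "marg_XY P x y = (\<Sum>t\<in>UNIV. P t x y)"

definition entropy :: "('a::finite \<Rightarrow> real) \<Rightarrow> real" where
  "entropy p = - (\<Sum>a\<in>UNIV. if p a = 0 then 0 else p a * log 2 (p a))"

definition cond_entropy_T_XY :: "('t::finite \<Rightarrow> 'x::finite \<Rightarrow> 'y::finite \<Rightarrow> real) \<Rightarrow> real" where
  "cond_entropy_T_XY Q = - (\<Sum>t\<in>UNIV. \<Sum>x\<in>UNIV. \<Sum>y\<in>UNIV.
      if Q t x y = 0 then 0 else Q t x y * log 2 (Q t x y / marg_XY Q x y))"

definition Delta_P :: "('t::finite \<Rightarrow> 'x::finite \<Rightarrow> 'y::finite \<Rightarrow> real) \<Rightarrow> ('t \<Rightarrow> 'x \<Rightarrow> 'y \<Rightarrow> real) set" where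
  "Delta_P P = {Q. is_dist Q \<and> (\<forall>t x. marg_TX Q t x = marg_TX P t x) \<and> (\<forall>t y. marg_TY Q t y = marg_TY P t y)}"

definition argmax_cond_entropy :: "('t::finite \<Rightarrow> 'x::finite \<Rightarrow> 'y::finite \<Rightarrow> real) \<Rightarrow> ('t \<Rightarrow> 'x \<Rightarrow> 'y \<Rightarrow> real) set" where
  "argmax_cond_entropy P = {Q \<in> Delta_P P. \<forall>Q'\<in>Delta_P P. cond_entropy_T_XY Q' \<le> cond_entropy_T_XY Q}"

end

theory Submission
  imports Defs
begin

lemma term_ineq:
  fixes q m a :: real
  assumes "0 \<le> q" "q \<le> m" "q \<le> a"
  shows "-(if q=0 then 0 else q*log 2 (q/m)) \<le> -(if q=0 then 0 else q*log 2 a) + (m*a - q)/ln 2"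
proof (cases "q = 0")
  case True
  then show ?thesis using assms by simp
next
  case False
  then have q: "q > 0" using assms by simp
  have m: "m > 0" "a > 0" using q assms by auto
  have l2: "ln 2 > (0::real)" by simp
  have e: "q*log 2 a - q*log 2 (q/m) = q * ln (m*a/q) / ln 2"
    using q m by (simp add: log_def ln_div ln_mult field_simps)
  have "ln (m*a/q) \<le> m*a/q - 1" using q m by (intro ln_le_minus_one) simp
  then have "q * ln (m*a/q) \<le> q * (m*a/q - 1)" using q by (intro mult_left_mono) auto
  also have "\<dots> = m*a - q" using q by (simp add: field_simps)
  finally have "q * ln (m*a/q) / ln 2 \<le> (m*a - q)/ln 2" using l2 by (simp add: divide_right_mono)
  then show ?thesis using e False by simp
qed

lemma marg_T_eq:
  assumes "Q \<in> Delta_P P" shows "marg_T Q t = marg_T P t"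
proof -
  have "marg_T Q t = (\<Sum>x\<in>UNIV. marg_TX Q t x)" by (simp add: marg_T_def marg_TX_def)
  also have "\<dots> = (\<Sum>x\<in>UNIV. marg_TX P t x)" using assms by (simp add: Delta_P_def)
  also have "\<dots> = marg_T P t" by (simp add: marg_T_def marg_TX_def)
  finally show ?thesis .
qed

lemma upper:
  fixes Q :: "'t::finite \<Rightarrow> 'x::finite \<Rightarrow> 'y::finite \<Rightarrow> real"
  assumes "Q \<in> Delta_P P"
  shows "cond_entropy_T_XY Q \<le> - (\<Sum>t\<in>UNIV. if marg_T P t = 0 then 0 else marg_T P t * log 2 (marg_T P t))"
proof -
  define a where "a = marg_T Q"
  define m where "m = marg_XY Q"
  have d: "is_dist Q" using assms by (simp add: Delta_P_def)
  have nn: "\<And>t x y. 0 \<le> Q t x y" using d by (simp add: is_dist_def)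
  have s1: "(\<Sum>t\<in>UNIV. \<Sum>x\<in>UNIV. \<Sum>y\<in>UNIV. Q t x y) = 1" using d by (simp add: is_dist_def)
  have qm: "Q t x y \<le> m x y" for t x y
    unfolding m_def marg_XY_def using nn by (intro member_le_sum) auto
  have qa: "Q t x y \<le> a t" for t x y
  proof -
    have "Q t x y \<le> (\<Sum>y\<in>UNIV. Q t x y)" using nn by (intro member_le_sum) auto
    also have "\<dots> \<le> (\<Sum>x\<in>UNIV. \<Sum>y\<in>UNIV. Q t x y)" using nn
      by (intro member_le_sum[where f="\<lambda>x. \<Sum>y\<in>UNIV. Q t x y"]) (auto intro: sum_nonneg)
    finally show ?thesis by (simp add: a_def marg_T_def)
  qed
  define f where "f t x y = (if Q t x y = 0 then 0 else Q t x y * log 2 (Q t x y / m x y))" for t x y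
  define g where "g t x y = (if Q t x y = 0 then 0 else Q t x y * log 2 (a t))" for t x y
  have "cond_entropy_T_XY Q = (\<Sum>t\<in>UNIV. \<Sum>x\<in>UNIV. \<Sum>y\<in>UNIV. - f t x y)"
    unfolding cond_entropy_T_XY_def f_def m_def by (simp add: sum_negf)
  also have "\<dots> \<le> (\<Sum>t\<in>UNIV. \<Sum>x\<in>UNIV. \<Sum>y\<in>UNIV. - g t x y + (m x y * a t - Q t x y)/ln 2)"
    unfolding f_def g_def by (intro sum_mono term_ineq nn qm qa)
  also have "\<dots> = - (\<Sum>t\<in>UNIV. \<Sum>x\<in>UNIV. \<Sum>y\<in>UNIV. g t x y)
       + ((\<Sum>t\<in>UNIV. \<Sum>x\<in>UNIV. \<Sum>y\<in>UNIV. m x y * a t) - (\<Sum>t\<in>UNIV. \<Sum>x\<in>UNIV. \<Sum>y\<in>UNIV. Q t x y))/ln 2"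
    by (simp add: sum.distrib sum_negf sum_subtractf sum_divide_distrib diff_divide_distrib)
  also have "(\<Sum>t\<in>UNIV. \<Sum>x\<in>UNIV. \<Sum>y\<in>UNIV. m x y * a t) = 1"
  proof -
    have "(\<Sum>t\<in>UNIV. \<Sum>x\<in>UNIV. \<Sum>y\<in>UNIV. m x y * a t) = (\<Sum>t\<in>UNIV. a t) * (\<Sum>x\<in>UNIV. \<Sum>y\<in>UNIV. m x y)"
    proof -
      have "(\<Sum>t\<in>UNIV. \<Sum>x\<in>UNIV. \<Sum>y\<in>UNIV. m x y * a t) = (\<Sum>t\<in>UNIV. a t * (\<Sum>x\<in>UNIV. \<Sum>y\<in>UNIV. m x y))"
        by (simp add: sum_distrib_left mult.commute)
      then show ?thesis by (simp add: sum_distrib_right)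
    qed
    moreover have "(\<Sum>t\<in>UNIV. a t) = 1" using s1 by (simp add: a_def marg_T_def)
    moreover have "(\<Sum>x\<in>UNIV. \<Sum>y\<in>UNIV. m x y) = 1"
    proof -
      have "(\<Sum>x\<in>UNIV. \<Sum>y\<in>UNIV. \<Sum>t\<in>UNIV. Q t x y) = (\<Sum>x\<in>UNIV. \<Sum>t\<in>UNIV. \<Sum>y\<in>UNIV. Q t x y)"
        by (intro sum.cong refl sum.swap)
      also have "\<dots> = (\<Sum>t\<in>UNIV. \<Sum>x\<in>UNIV. \<Sum>y\<in>UNIV. Q t x y)" by (rule sum.swap)
      finally show ?thesis using s1 by (simp add: m_def marg_XY_def)
    qed
    ultimately show ?thesis by simp
  qed
  also have "(\<Sum>t\<in>UNIV. \<Sum>x\<in>UNIV. \<Sum>y\<in>UNIV. g t x y)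
     = (\<Sum>t\<in>UNIV. if marg_T P t = 0 then 0 else marg_T P t * log 2 (marg_T P t))"
  proof (rule sum.cong[OF refl])
    fix t
    have "(\<Sum>x\<in>UNIV. \<Sum>y\<in>UNIV. g t x y) = (\<Sum>x\<in>UNIV. \<Sum>y\<in>UNIV. Q t x y * log 2 (a t))"
      unfolding g_def by (intro sum.cong refl) simp
    also have "\<dots> = a t * log 2 (a t)"
      by (simp add: a_def marg_T_def sum_distrib_right)
    also have "\<dots> = (if marg_T P t = 0 then 0 else marg_T P t * log 2 (marg_T P t))"
      using marg_T_eq[OF assms] by (simp add: a_def)
    finally show "(\<Sum>x\<in>UNIV. \<Sum>y\<in>UNIV. g t x y) = \<dots>" .
  qed
  finally show ?thesis using s1 by simp
qed

lemma margX_props: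
  fixes P :: "'t::finite \<Rightarrow> 'x::finite \<Rightarrow> 'y::finite \<Rightarrow> real"
  assumes "is_dist P"
  shows "\<forall>x. 0 \<le> marg_X P x" "(\<Sum>x\<in>UNIV. marg_X P x) = 1"
    "\<forall>y. 0 \<le> marg_Y P y" "(\<Sum>y\<in>UNIV. marg_Y P y) = 1"
    "\<forall>t. 0 \<le> marg_T P t" "(\<Sum>t\<in>UNIV. marg_T P t) = 1"
proof -
  have nn: "\<And>t x y. 0 \<le> P t x y" and s1: "(\<Sum>t\<in>UNIV. \<Sum>x\<in>UNIV. \<Sum>y\<in>UNIV. P t x y) = 1"
    using assms by (auto simp: is_dist_def)
  show "\<forall>x. 0 \<le> marg_X P x" "\<forall>y. 0 \<le> marg_Y P y" "\<forall>t. 0 \<le> marg_T P t"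
    using nn by (auto simp: marg_X_def marg_Y_def marg_T_def intro!: sum_nonneg)
  show "(\<Sum>t\<in>UNIV. marg_T P t) = 1" using s1 by (simp add: marg_T_def)
  have "(\<Sum>x\<in>UNIV. \<Sum>t\<in>UNIV. \<Sum>y\<in>UNIV. P t x y) = 1" using s1 by (subst sum.swap) simp
  then show "(\<Sum>x\<in>UNIV. marg_X P x) = 1" by (simp add: marg_X_def)
  have "(\<Sum>t\<in>UNIV. \<Sum>y\<in>UNIV. \<Sum>x\<in>UNIV. P t x y) = 1" using s1
    by (subst (asm) sum.cong[OF refl sum.swap]) simp
  then have "(\<Sum>y\<in>UNIV. \<Sum>t\<in>UNIV. \<Sum>x\<in>UNIV. P t x y) = 1" by (subst sum.swap) simp
  then show "(\<Sum>y\<in>UNIV. marg_Y P y) = 1" by (simp add: marg_Y_def)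
qed

lemma two_support:
  fixes p :: "'a::finite \<Rightarrow> real"
  assumes "\<forall>x. 0 \<le> p x" "sum p UNIV = 1" "entropy p > 0"
  shows "\<exists>x1 x2. x1 \<noteq> x2 \<and> p x1 > 0 \<and> p x2 > 0"
proof (rule ccontr)
  assume H: "\<not> ?thesis"
  have "\<forall>x. (if p x = 0 then 0 else p x * log 2 (p x)) = 0"
  proof
    fix x
    show "(if p x = 0 then 0 else p x * log 2 (p x)) = 0"
    proof (cases "p x = 0")
      case False
      then have px: "p x > 0" using assms(1) by (metis order_le_less)
      have "\<forall>x'\<in>UNIV - {x}. p x' = 0"
        using H px assms(1) by (metis DiffE order_le_less singletonI)
      then have "sum p UNIV = p x" using sum.remove[of UNIV x p] sum.neutral[of "UNIV - {x}" p] by simp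
      then have "p x = 1" using assms(2) by simp
      then show ?thesis by simp
    qed simp
  qed
  then have "entropy p = 0" by (simp add: entropy_def)
  then show False using assms(3) by simp
qed

lemma achiever:
  fixes P :: "'t::finite \<Rightarrow> 'x::finite \<Rightarrow> 'y::finite \<Rightarrow> real" and r :: "'x \<Rightarrow> 'y \<Rightarrow> real"
  assumes dP: "is_dist P"
    and iX: "\<forall>t x. marg_TX P t x = marg_T P t * marg_X P x"
    and iY: "\<forall>t y. marg_TY P t y = marg_T P t * marg_Y P y"
    and rnn: "\<forall>x y. 0 \<le> r x y"
    and rX: "\<forall>x. (\<Sum>y\<in>UNIV. r x y) = marg_X P x"
    and rY: "\<forall>y. (\<Sum>x\<in>UNIV. r x y) = marg_Y P y"
  shows "(\<lambda>t x y. marg_T P t * r x y) \<in> argmax_cond_entropy P"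
proof -
  define a where "a = marg_T P"
  define Q where "Q = (\<lambda>t x y. a t * r x y)"
  note mp = margX_props[OF dP]
  have ann: "\<forall>t. 0 \<le> a t" and a1: "(\<Sum>t\<in>UNIV. a t) = 1" using mp by (auto simp: a_def)
  have r1: "(\<Sum>x\<in>UNIV. \<Sum>y\<in>UNIV. r x y) = 1" using rX mp by simp
  have dQ: "is_dist Q"
  proof -
    have "(\<Sum>t\<in>UNIV. \<Sum>x\<in>UNIV. \<Sum>y\<in>UNIV. Q t x y) = (\<Sum>t\<in>UNIV. a t * (\<Sum>x\<in>UNIV. \<Sum>y\<in>UNIV. r x y))"
      by (simp add: Q_def sum_distrib_left)
    also have "\<dots> = 1" using r1 a1 by simp
    finally show ?thesis using ann rnn by (simp add: is_dist_def Q_def)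
  qed
  have QD: "Q \<in> Delta_P P"
    unfolding Delta_P_def using dQ iX iY rX rY
    by (simp add: Q_def a_def marg_TX_def[of "\<lambda>t x y. marg_T P t * r x y"] marg_TY_def[of "\<lambda>t x y. marg_T P t * r x y"] sum_distrib_left[symmetric])
  have mXY: "marg_XY Q x y = r x y" for x y
    using a1 by (simp add: marg_XY_def Q_def sum_distrib_right[symmetric])
  have "cond_entropy_T_XY Q = - (\<Sum>t\<in>UNIV. \<Sum>x\<in>UNIV. \<Sum>y\<in>UNIV. r x y * (if a t = 0 then 0 else a t * log 2 (a t)))"
    unfolding cond_entropy_T_XY_def mXY
    by (intro arg_cong[where f=uminus] sum.cong refl) (auto simp: Q_def)
  also have "\<dots> = - (\<Sum>t\<in>UNIV. (if a t = 0 then 0 else a t * log 2 (a t)))"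
    using r1 by (simp add: sum_distrib_right[symmetric])
  finally have ceQ: "cond_entropy_T_XY Q = - (\<Sum>t\<in>UNIV. (if marg_T P t = 0 then 0 else marg_T P t * log 2 (marg_T P t)))"
    by (simp only: a_def)
  show ?thesis
    unfolding argmax_cond_entropy_def using QD upper ceQ by (auto simp: Q_def a_def)
qed

theorem mainTheorem10:
  fixes P :: "'t::finite \<Rightarrow> 'x::finite \<Rightarrow> 'y::finite \<Rightarrow> real"
  assumes "is_dist P"
    and "entropy (marg_X P) > 0"
    and "entropy (marg_Y P) > 0"
    and "\<forall>t x. marg_TX P t x = marg_T P t * marg_X P x"
    and "\<forall>t y. marg_TY P t y = marg_T P t * marg_Y P y"
  shows "\<exists>Q1 Q2. Q1 \<in> argmax_cond_entropy P \<and> Q2 \<in> argmax_cond_entropy P \<and> Q1 \<noteq> Q2"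
proof -
  note mp = margX_props[OF assms(1)]
  define px where "px = marg_X P"
  define py where "py = marg_Y P"
  obtain x1 x2 where x12: "x1 \<noteq> x2" "px x1 > 0" "px x2 > 0"
    using two_support[of "marg_X P"] mp assms(2) by (auto simp: px_def)
  obtain y1 y2 where y12: "y1 \<noteq> y2" "py y1 > 0" "py y2 > 0"
    using two_support[of "marg_Y P"] mp assms(3) by (auto simp: py_def)
  define e where "e = min (px x1 * py y2) (px x2 * py y1)"
  have e0: "e > 0" using x12 y12 by (simp add: e_def)
  define s where "s x = (if x = x1 then 1 else 0) - (if x = x2 then 1 else (0::real))" for x
  define s' where "s' y = (if y = y1 then 1 else 0) - (if y = y2 then 1 else (0::real))" for y
  have ss: "sum s UNIV = 0" by (simp add: s_def sum_subtractf)
  have ss': "sum s' UNIV = 0" by (simp add: s'_def sum_subtractf)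
  define r1 where "r1 x y = px x * py y" for x y
  define r2 where "r2 x y = px x * py y + e * (s x * s' y)" for x y
  have pxn: "\<forall>x. 0 \<le> px x" and pyn: "\<forall>y. 0 \<le> py y" using mp by (auto simp: px_def py_def)
  have A1: "(\<lambda>t x y. marg_T P t * r1 x y) \<in> argmax_cond_entropy P"
    using mp pxn pyn
    by (intro achiever assms) (auto simp: r1_def px_def py_def sum_distrib_left[symmetric] sum_distrib_right[symmetric])
  have r2nn: "0 \<le> r2 x y" for x y
  proof -
    have "e \<le> px x1 * py y2" "e \<le> px x2 * py y1" by (auto simp: e_def)
    moreover have "0 \<le> px x * py y" using pxn pyn by simp
    ultimately show ?thesis using e0 x12(1) y12(1)
      by (auto simp: r2_def s_def s'_def)
  qed
  have A2: "(\<lambda>t x y. marg_T P t * r2 x y) \<in> argmax_cond_entropy P"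
  proof (intro achiever assms allI r2nn)
    fix x show "(\<Sum>y\<in>UNIV. r2 x y) = marg_X P x"
      using mp ss' by (simp add: r2_def sum.distrib px_def py_def sum_distrib_left[symmetric])
  next
    fix y show "(\<Sum>x\<in>UNIV. r2 x y) = marg_Y P y"
      using mp ss by (simp add: r2_def sum.distrib px_def py_def sum_distrib_left[symmetric] sum_distrib_right[symmetric])
  qed
  obtain t where t: "marg_T P t \<noteq> 0"
    using mp(6) by (metis (no_types, lifting) sum.neutral zero_neq_one)
  have "marg_T P t * r1 x1 y1 \<noteq> marg_T P t * r2 x1 y1"
    using t e0 x12(1) y12(1) by (simp add: r1_def r2_def s_def s'_def)
  then have "(\<lambda>t x y. marg_T P t * r1 x y) \<noteq> (\<lambda>t x y. marg_T P t * r2 x y)" by metis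
  then show ?thesis using A1 A2 by blast
qed

end
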